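(* Let $\beta,\gamma$ be real numbers with $0<\beta\le\gamma\le1$, let $m\ge0$ be an integer, let $\theta=(k_r)$ be a lacunary sequence and let $0<p<\infty$. Then $N_\theta^\beta(p,F,\Delta^m)\subset S_\theta^\gamma(F,\Delta^m)$ (and a sequence strongly $N_\theta^\beta(p,F,\Delta^m)$-summable to $X_0$ is $S_\theta^\gamma(F,\Delta^m)$-statistically convergent to $X_0$). Moreover, the inclusion is strict for some choices of $\beta$ and $\gamma$.
   Context: A fuzzy number is a map $X:\mathbb{R}\to[0,1]$ which is normal, fuzzy convex, upper semicontinuous, with compact closure of $\{t:X(t)>0\}$; $L(\mathbb{R})$ is the set of fuzzy numbers. Level sets $[X]^\alpha=\{t:X(t)\ge\alpha\}$ ($\alpha\in(0,1]$), $[X]^0=\overline{\{t:X(t)>0\}}$, are compact intervals $[u^\alpha,v^\alpha]$. Subtraction: $[X-Y]^\alpha=[u_1^\alpha-v_2^\alpha,v_1^\alpha-u_2^\alpha]$. Metric: $d(X,Y)=\sup_{\alpha\in[0,1]}\max\{|u_1^\alpha-u_2^\alpha|,|v_1^\alpha-v_2^\alpha|\}$. $(\Delta^0X)_k=X_k$, $(\Delta^1X)_k=X_k-X_{k+1}$, $(\Delta^mX)_k=(\Delta^1(\Delta^{m-1}X))_k$. A lacunary sequence is an increasing integer sequence $\theta=(k_r)_{r\ge0}$ with $k_0=0$, $h_r=k_r-k_{r-1}\to\infty$; $I_r=(k_{r-1},k_r]$. $S_\theta^\gamma(F,\Delta^m)$: sequences $X$ with some $X_0\in L(\mathbb{R})$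 such that for all $\varepsilon>0$, $\lim_r\frac{1}{h_r^\gamma}|\{k\in I_r:d(\Delta^mX_k,X_0)\ge\varepsilon\}|=0$. $N_\theta^\beta(p,F,\Delta^m)$: sequences $X$ with some $X_0\in L(\mathbb{R})$ (the limit) such that $\lim_r\frac{1}{h_r^\beta}\sum_{k\in I_r}d(\Delta^mX_k,X_0)^p=0$. *)

theory Defs
  imports "HOL-Analysis.Analysis"
begin

type_synonym fuzzy = "real \<Rightarrow> real"

definition usc :: "fuzzy \<Rightarrow> bool" where
  "usc X \<longleftrightarrow> (\<forall>t c. X t < c \<longrightarrow> (\<forall>\<^sub>F s in at t. X s < c))"

definition fuzzy_number :: "fuzzy \<Rightarrow> bool" where
  "fuzzy_number X \<longleftrightarrow>
     (\<forall>t. 0 \<le> X t \<and> X t \<le> 1) \<and>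
     (\<exists>t. X t = 1) \<and>
     (\<forall>x y l. 0 \<le> l \<and> l \<le> 1 \<longrightarrow> min (X x) (X y) \<le> X (l * x + (1 - l) * y)) \<and>
     usc X \<and>
     compact (closure {t. X t > 0})"

definition level :: "fuzzy \<Rightarrow> real \<Rightarrow> real set" where
  "level X a = (if 0 < a then {t. X t \<ge> a} else closure {t. X t > 0})"

definition lower :: "fuzzy \<Rightarrow> real \<Rightarrow> real" where
  "lower X a = Inf (level X a)"

definition upper :: "fuzzy \<Rightarrow> real \<Rightarrow> real" where
  "upper X a = Sup (level X a)"

text \<open>Subtraction of fuzzy numbers via Zadeh's extension principle; for fuzzy numbers
  its level sets are [u1 - v2, v1 - u2].\<close>
definition fsub :: "fuzzy \<Rightarrow> fuzzy \<Rightarrow> fuzzy" where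
  "fsub X Y = (\<lambda>t. Sup {min (X a) (Y b) | a b. a - b = t})"

definition fdist :: "fuzzy \<Rightarrow> fuzzy \<Rightarrow> real" where
  "fdist X Y = (SUP a\<in>{0..1}. max \<bar>lower X a - lower Y a\<bar> \<bar>upper X a - upper Y a\<bar>)"

fun fdelta :: "nat \<Rightarrow> (nat \<Rightarrow> fuzzy) \<Rightarrow> nat \<Rightarrow> fuzzy" where
  "fdelta 0 X k = X k"
| "fdelta (Suc m) X k = fsub (fdelta m X k) (fdelta m X (Suc k))"

definition lacunary :: "(nat \<Rightarrow> nat) \<Rightarrow> bool" where
  "lacunary \<theta> \<longleftrightarrow> strict_mono \<theta> \<and> \<theta> 0 = 0 \<and>
     filterlim (\<lambda>r. \<theta> r - \<theta> (r - 1)) at_top sequentially"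

definition hr :: "(nat \<Rightarrow> nat) \<Rightarrow> nat \<Rightarrow> nat" where
  "hr \<theta> r = \<theta> r - \<theta> (r - 1)"

definition Ir :: "(nat \<Rightarrow> nat) \<Rightarrow> nat \<Rightarrow> nat set" where
  "Ir \<theta> r = {\<theta> (r - 1)<..\<theta> r}"

definition fuzzy_seq :: "(nat \<Rightarrow> fuzzy) \<Rightarrow> bool" where
  "fuzzy_seq X \<longleftrightarrow> (\<forall>k. fuzzy_number (X k))"

definition stat_conv :: "real \<Rightarrow> (nat \<Rightarrow> nat) \<Rightarrow> nat \<Rightarrow> (nat \<Rightarrow> fuzzy) \<Rightarrow> fuzzy \<Rightarrow> bool" where
  "stat_conv \<gamma> \<theta> m X X0 \<longleftrightarrow>
     (\<forall>\<epsilon>>0. (\<lambda>r. real (card {k \<in> Ir \<theta> r. fdist (fdelta m X k) X0 \<ge> \<epsilon>}) / real (hr \<theta> r) powr \<gamma>)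
              \<longlonglongrightarrow> 0)"

definition strong_conv :: "real \<Rightarrow> real \<Rightarrow> (nat \<Rightarrow> nat) \<Rightarrow> nat \<Rightarrow> (nat \<Rightarrow> fuzzy) \<Rightarrow> fuzzy \<Rightarrow> bool" where
  "strong_conv \<beta> p \<theta> m X X0 \<longleftrightarrow>
     (\<lambda>r. (\<Sum>k\<in>Ir \<theta> r. fdist (fdelta m X k) X0 powr p) / real (hr \<theta> r) powr \<beta>) \<longlonglongrightarrow> 0"

definition S_theta :: "real \<Rightarrow> (nat \<Rightarrow> nat) \<Rightarrow> nat \<Rightarrow> (nat \<Rightarrow> fuzzy) set" where
  "S_theta \<gamma> \<theta> m = {X. fuzzy_seq X \<and> (\<exists>X0. fuzzy_number X0 \<and> stat_conv \<gamma> \<theta> m X X0)}"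

definition N_theta :: "real \<Rightarrow> real \<Rightarrow> (nat \<Rightarrow> nat) \<Rightarrow> nat \<Rightarrow> (nat \<Rightarrow> fuzzy) set" where
  "N_theta \<beta> p \<theta> m = {X. fuzzy_seq X \<and> (\<exists>X0. fuzzy_number X0 \<and> strong_conv \<beta> p \<theta> m X X0)}"

end

theory Submission
  imports Defs
begin

definition crisp :: "real \<Rightarrow> fuzzy" where
  "crisp a = (\<lambda>t. if t = a then 1 else 0)"

lemma crisp_fuzzy: "fuzzy_number (crisp a)"
proof -
  have "usc (crisp a)" unfolding usc_def
  proof (intro allI impI)
    fix t c assume c: "crisp a t < c"
    show "\<forall>\<^sub>F s in at t. crisp a s < c"
    proof (cases "t = a")
      case True then show ?thesis using c by (auto simp: crisp_def intro!: always_eventually)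
    next
      case False
      have "\<forall>\<^sub>F s in at t. s \<noteq> a"
        by (rule eventually_neq_at_within)
      then show ?thesis by (rule eventually_mono) (use c False in \<open>auto simp: crisp_def\<close>)
    qed
  qed
  moreover have pos: "{t. crisp a t > 0} = {a}" by (auto simp: crisp_def)
  moreover have "\<forall>t. 0 \<le> crisp a t \<and> crisp a t \<le> 1" by (simp add: crisp_def)
  moreover have "\<exists>t. crisp a t = 1" by (simp add: crisp_def)
  moreover have "\<forall>x y l. 0 \<le> l \<and> l \<le> 1 \<longrightarrow> min (crisp a x) (crisp a y) \<le> crisp a (l * x + (1 - l) * y)"
  proof (intro allI impI)
    fix x y l :: real
    show "min (crisp a x) (crisp a y) \<le> crisp a (l * x + (1 - l) * y)"
    proof (cases "x = a \<and> y = a")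
      case True
      then have "l * x + (1 - l) * y = a" by (simp add: algebra_simps)
      then show ?thesis by (simp add: crisp_def)
    next
      case False
      then have "min (crisp a x) (crisp a y) = 0" by (auto simp: crisp_def)
      then show ?thesis by (simp add: crisp_def)
    qed
  qed
  moreover have "compact (closure {t. crisp a t > 0})" unfolding pos by simp
  ultimately show ?thesis unfolding fuzzy_number_def by blast
qed

lemma level_crisp:
  assumes "0 \<le> \<alpha>" "\<alpha> \<le> 1" shows "level (crisp a) \<alpha> = {a}"
proof (cases "0 < \<alpha>")
  case True
  have "{t. crisp a t \<ge> \<alpha>} = {a}" using True assms(2) by (auto simp: crisp_def split: if_splits)
  then show ?thesis using True by (simp add: level_def)
next
  case False
  have "{t. crisp a t > 0} = {a}" by (auto simp: crisp_def)
  then show ?thesis using False by (simp add: level_def)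
qed

lemma lower_crisp: "0 \<le> \<alpha> \<Longrightarrow> \<alpha> \<le> 1 \<Longrightarrow> lower (crisp a) \<alpha> = a"
  by (simp add: lower_def level_crisp)
lemma upper_crisp: "0 \<le> \<alpha> \<Longrightarrow> \<alpha> \<le> 1 \<Longrightarrow> upper (crisp a) \<alpha> = a"
  by (simp add: upper_def level_crisp)

lemma fdist_crisp: "fdist (crisp a) (crisp b) = \<bar>a - b\<bar>"
proof -
  have "fdist (crisp a) (crisp b) = (SUP x\<in>{0..(1::real)}. \<bar>a - b\<bar>)"
    unfolding fdist_def by (rule SUP_cong) (auto simp: lower_crisp upper_crisp)
  also have "\<dots> = \<bar>a - b\<bar>" by simp
  finally show ?thesis .
qed

lemma fsub_crisp: "fsub (crisp a) (crisp b) = crisp (a - b)"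
proof
  fix t
  let ?S = "{min (crisp a x) (crisp b y) | x y. x - y = t}"
  show "fsub (crisp a) (crisp b) t = crisp (a - b) t"
  proof (cases "t = a - b")
    case True
    have "min (crisp a a) (crisp b b) = 1" by (simp add: crisp_def)
    moreover have "a - b = t" using True by simp
    ultimately have "1 \<in> ?S" by (metis (mono_tags, lifting) mem_Collect_eq)
    moreover have "\<forall>s\<in>?S. s \<le> 1" by (auto simp: crisp_def)
    ultimately have "Sup ?S = 1" by (intro cSup_eq_maximum) auto
    then show ?thesis using True by (simp add: fsub_def crisp_def)
  next
    case False
    have "?S = {0}"
    proof
      show "?S \<subseteq> {0}"
      proof
        fix s assume "s \<in> ?S"
        then obtain x y where s: "s = min (crisp a x) (crisp b y)" and xy: "x - y = t" by blast
        have "\<not> (x = a \<and> y = b)" using xy False by auto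
        then show "s \<in> {0}" using s by (auto simp: crisp_def)
      qed
      have "min (crisp a (t + b)) (crisp b b) = 0" using False by (simp add: crisp_def)
      moreover have "(t + b) - b = t" by simp
      ultimately have "0 \<in> ?S" by (metis (mono_tags, lifting) mem_Collect_eq)
      then show "{0} \<subseteq> ?S" by simp
    qed
    then show ?thesis using False by (simp add: fsub_def crisp_def)
  qed
qed

fun rdelta :: "nat \<Rightarrow> (nat \<Rightarrow> real) \<Rightarrow> nat \<Rightarrow> real" where
  "rdelta 0 x k = x k"
| "rdelta (Suc m) x k = rdelta m x k - rdelta m x (Suc k)"

lemma fdelta_crisp: "fdelta m (\<lambda>k. crisp (x k)) k = crisp (rdelta m x k)"
  by (induction m arbitrary: k) (simp_all add: fsub_crisp)

definition ssum :: "(nat \<Rightarrow> real) \<Rightarrow> nat \<Rightarrow> real" where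
  "ssum x k = - (\<Sum>j<k. x j)"

lemma rdelta_ssum: "rdelta m ((ssum ^^ m) x) k = x k"
proof (induction m arbitrary: x k)
  case 0 then show ?case by simp
next
  case (Suc m)
  define Y where "Y = (ssum ^^ m) (ssum x)"
  have "(ssum ^^ Suc m) x = Y" unfolding Y_def by (simp add: funpow_Suc_right del: funpow.simps)
  moreover have "rdelta (Suc m) Y k = ssum x k - ssum x (Suc k)"
    using Suc.IH[of "ssum x"] by (simp add: Y_def)
  moreover have "ssum x k - ssum x (Suc k) = x k" by (simp add: ssum_def)
  ultimately show ?case by simp
qed

lemma fuzzy_bounded:
  assumes "fuzzy_number X"
  shows "\<exists>B. \<forall>\<alpha>\<in>{0..1}. \<bar>lower X \<alpha>\<bar> \<le> B \<and> \<bar>upper X \<alpha>\<bar> \<le> B"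
proof -
  let ?C = "closure {t. X t > 0}"
  have "compact ?C" using assms by (simp add: fuzzy_number_def)
  then have "bounded ?C" by (rule compact_imp_bounded)
  then obtain B where B: "\<And>x. x \<in> ?C \<Longrightarrow> \<bar>x\<bar> \<le> B"
    unfolding bounded_real by blast
  obtain t1 where t1: "X t1 = 1" using assms by (auto simp: fuzzy_number_def)
  have sub: "level X \<alpha> \<subseteq> ?C" if "\<alpha> \<in> {0..1}" for \<alpha>
  proof (cases "0 < \<alpha>")
    case True
    have "{t. X t \<ge> \<alpha>} \<subseteq> {t. X t > 0}" using True by auto
    then show ?thesis using True closure_subset[of "{t. X t > 0}"] by (auto simp: level_def)
  next
    case False then show ?thesis by (simp add: level_def)
  qed
  have ne: "t1 \<in> level X \<alpha>" if "\<alpha> \<in> {0..1}" for \<alpha>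
  proof (cases "0 < \<alpha>")
    case True then show ?thesis using that t1 by (simp add: level_def)
  next
    case False
    have "t1 \<in> {t. X t > 0}" using t1 by simp
    then show ?thesis using False closure_subset[of "{t. X t > 0}"] by (auto simp: level_def)
  qed
  have "\<bar>lower X \<alpha>\<bar> \<le> B \<and> \<bar>upper X \<alpha>\<bar> \<le> B" if a: "\<alpha> \<in> {0..1}" for \<alpha>
  proof -
    have bb: "\<And>x. x \<in> level X \<alpha> \<Longrightarrow> \<bar>x\<bar> \<le> B" using B sub[OF a] by blast
    have ub: "\<And>x. x \<in> level X \<alpha> \<Longrightarrow> x \<le> B" using bb abs_le_D1 by blast
    have lb: "\<And>x. x \<in> level X \<alpha> \<Longrightarrow> -B \<le> x"
    proof -
      fix x assume "x \<in> level X \<alpha>"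
      then have "-x \<le> B" using bb abs_le_D2 by blast
      then show "-B \<le> x" by linarith
    qed
    have bda: "bdd_above (level X \<alpha>)" using ub by (rule bdd_aboveI)
    have bdb: "bdd_below (level X \<alpha>)" using lb by (rule bdd_belowI)
    have n: "level X \<alpha> \<noteq> {}" using ne[OF a] by blast
    have l1: "lower X \<alpha> \<le> t1" unfolding lower_def by (rule cInf_lower[OF ne[OF a] bdb])
    have l2: "lower X \<alpha> \<ge> -B" unfolding lower_def by (rule cInf_greatest[OF n lb])
    have u1: "upper X \<alpha> \<ge> t1" unfolding upper_def by (rule cSup_upper[OF ne[OF a] bda])
    have u2: "upper X \<alpha> \<le> B" unfolding upper_def by (rule cSup_least[OF n ub])
    have "\<bar>t1\<bar> \<le> B" using bb ne[OF a] by blast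
    then show ?thesis using l1 l2 u1 u2 by linarith
  qed
  then show ?thesis by blast
qed

lemma fdist_crisp_ge:
  assumes "fuzzy_number X"
  shows "fdist (crisp a) X \<ge> \<bar>a - lower X 1\<bar>"
proof -
  obtain B where B: "\<And>\<alpha>. \<alpha>\<in>{0..1} \<Longrightarrow> \<bar>lower X \<alpha>\<bar> \<le> B \<and> \<bar>upper X \<alpha>\<bar> \<le> B"
    using fuzzy_bounded[OF assms] by blast
  define f where "f \<alpha> = max \<bar>lower (crisp a) \<alpha> - lower X \<alpha>\<bar> \<bar>upper (crisp a) \<alpha> - upper X \<alpha>\<bar>" for \<alpha>
  have fb: "f \<alpha> \<le> \<bar>a\<bar> + B" if "\<alpha> \<in> {0..1}" for \<alpha>
  proof -
    have "lower (crisp a) \<alpha> = a" "upper (crisp a) \<alpha> = a" using that by (auto simp: lower_crisp upper_crisp)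
    then show ?thesis using B[OF that] unfolding f_def by linarith
  qed
  have "bdd_above (f ` {0..1})" using fb by (intro bdd_aboveI2) 
  then have "f 1 \<le> (SUP \<alpha>\<in>{0..1}. f \<alpha>)" by (intro cSUP_upper) auto
  also have "\<dots> = fdist (crisp a) X" unfolding fdist_def f_def ..
  finally show ?thesis by (simp add: f_def lower_crisp upper_crisp)
qed

lemma strong_imp_stat:
  assumes "0 < \<beta>" "\<beta> \<le> \<gamma>" "0 < p" "strong_conv \<beta> p \<theta> m X X0"
  shows "stat_conv \<gamma> \<theta> m X X0"
  unfolding stat_conv_def
proof (intro allI impI)
  fix \<epsilon> :: real assume e: "\<epsilon> > 0"
  define S where "S r = (\<Sum>k\<in>Ir \<theta> r. fdist (fdelta m X k) X0 powr p) / real (hr \<theta> r) powr \<beta>" for r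
  have S0: "S \<longlonglongrightarrow> 0" using assms(4) unfolding strong_conv_def S_def by simp
  have ep: "\<epsilon> powr p > 0" using e by simp
  have lim: "(\<lambda>r. S r / \<epsilon> powr p) \<longlonglongrightarrow> 0" using tendsto_divide_zero[OF S0] by simp
  show "(\<lambda>r. real (card {k \<in> Ir \<theta> r. fdist (fdelta m X k) X0 \<ge> \<epsilon>}) / real (hr \<theta> r) powr \<gamma>) \<longlonglongrightarrow> 0"
  proof (rule tendsto_sandwich[OF _ _ tendsto_const lim])
    show "\<forall>\<^sub>F r in sequentially. 0 \<le> real (card {k \<in> Ir \<theta> r. fdist (fdelta m X k) X0 \<ge> \<epsilon>}) / real (hr \<theta> r) powr \<gamma>"
      by simp
    show "\<forall>\<^sub>F r in sequentially. real (card {k \<in> Ir \<theta> r. fdist (fdelta m X k) X0 \<ge> \<epsilon>}) / real (hr \<theta> r) powr \<gamma> \<le> S r / \<epsilon> powr p"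
    proof (rule always_eventually, rule allI)
      fix r
      define A where "A = {k \<in> Ir \<theta> r. fdist (fdelta m X k) X0 \<ge> \<epsilon>}"
      define T where "T = (\<Sum>k\<in>Ir \<theta> r. fdist (fdelta m X k) X0 powr p)"
      have fin: "finite (Ir \<theta> r)" unfolding Ir_def by simp
      have "real (card A) * \<epsilon> powr p = (\<Sum>k\<in>A. \<epsilon> powr p)" by simp
      also have "\<dots> \<le> (\<Sum>k\<in>A. fdist (fdelta m X k) X0 powr p)"
        by (rule sum_mono) (use e assms(3) in \<open>auto simp: A_def intro: powr_mono2\<close>)
      also have "\<dots> \<le> T" unfolding T_def
        by (rule sum_mono2[OF fin]) (auto simp: A_def)
      finally have cA: "real (card A) \<le> T / \<epsilon> powr p" using ep by (simp add: field_simps)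
      have T0: "T \<ge> 0" unfolding T_def by (simp add: sum_nonneg)
      show "real (card A) / real (hr \<theta> r) powr \<gamma> \<le> S r / \<epsilon> powr p"
      proof (cases "hr \<theta> r = 0")
        case True then show ?thesis using T0 ep by (simp add: S_def)
      next
        case False
        then have h1: "real (hr \<theta> r) \<ge> 1" by simp
        have hb: "real (hr \<theta> r) powr \<beta> \<le> real (hr \<theta> r) powr \<gamma>"
          using h1 assms(2) by (simp add: powr_mono)
        have hbp: "real (hr \<theta> r) powr \<beta> > 0" using False by simp
        have "real (card A) / real (hr \<theta> r) powr \<gamma> \<le> real (card A) / real (hr \<theta> r) powr \<beta>"
          by (rule divide_left_mono) (use hb hbp in auto)
        also have "\<dots> \<le> (T / \<epsilon> powr p) / real (hr \<theta> r) powr \<beta>"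
          by (rule divide_right_mono[OF cA]) (use hbp in auto)
        also have "\<dots> = S r / \<epsilon> powr p" by (simp add: S_def T_def)
        finally show ?thesis .
      qed
    qed
  qed
qed


lemma hr_real_at_top:
  assumes "lacunary \<theta>"
  shows "filterlim (\<lambda>r. real (hr \<theta> r)) at_top sequentially"
proof -
  have "filterlim (hr \<theta>) at_top sequentially"
    using assms unfolding lacunary_def hr_def[abs_def] by simp
  from filterlim_compose[OF filterlim_real_sequentially this] show ?thesis by simp
qed

lemma Ir_range:
  assumes "lacunary \<theta>" "k \<in> Ir \<theta> r" "k = \<theta> j"
  shows "j = r"
proof -
  have sm: "strict_mono \<theta>" using assms(1) by (simp add: lacunary_def)
  have "\<theta> (r - 1) < \<theta> j" "\<theta> j \<le> \<theta> r" using assms(2,3) by (auto simp: Ir_def)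
  then have "r - 1 < j" "j \<le> r" using sm by (simp_all add: strict_mono_less strict_mono_less_eq)
  then show ?thesis by linarith
qed

theorem theorem2p7:
  fixes \<beta> \<gamma> p :: real and m :: nat and \<theta> :: "nat \<Rightarrow> nat"
  assumes "0 < \<beta>" "\<beta> \<le> \<gamma>" "\<gamma> \<le> 1"
    and "lacunary \<theta>"
    and "0 < p"
  shows "N_theta \<beta> p \<theta> m \<subseteq> S_theta \<gamma> \<theta> m
    \<and> (\<forall>X X0. fuzzy_seq X \<longrightarrow> fuzzy_number X0 \<longrightarrow> strong_conv \<beta> p \<theta> m X X0
          \<longrightarrow> stat_conv \<gamma> \<theta> m X X0)
    \<and> (\<exists>\<beta>' \<gamma>'. 0 < \<beta>' \<and> \<beta>' \<le> \<gamma>' \<and> \<gamma>' \<le> 1 \<and> N_theta \<beta>' p \<theta> m \<subset> S_theta \<gamma>' \<theta> m)"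
proof -
  have incl: "N_theta b p \<theta> m \<subseteq> S_theta g \<theta> m" if "0 < b" "b \<le> g" for b g
    using strong_imp_stat[OF that assms(5)] unfolding N_theta_def S_theta_def by blast
  have sm: "strict_mono \<theta>" using assms(4) by (simp add: lacunary_def)
  define a where "a k = (if k \<in> range \<theta> then 2 * real (k + 1) powr (1 / p) else 0)" for k
  define X where "X k = crisp (((ssum ^^ m) a) k)" for k
  have dX: "fdelta m X k = crisp (a k)" for k
    unfolding X_def fdelta_crisp rdelta_ssum ..
  have fsX: "fuzzy_seq X" by (simp add: fuzzy_seq_def X_def crisp_fuzzy)
  have hinf: "filterlim (\<lambda>r. real (hr \<theta> r)) at_top sequentially"
    using hr_real_at_top[OF assms(4)] .
  have XS: "X \<in> S_theta 1 \<theta> m"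
  proof -
    have "stat_conv 1 \<theta> m X (crisp 0)" unfolding stat_conv_def
    proof (intro allI impI)
      fix \<epsilon> :: real assume e: "\<epsilon> > 0"
      have inv0: "(\<lambda>r. inverse (real (hr \<theta> r))) \<longlonglongrightarrow> 0"
        using tendsto_inverse_0_at_top[OF hinf] .
      show "(\<lambda>r. real (card {k \<in> Ir \<theta> r. fdist (fdelta m X k) (crisp 0) \<ge> \<epsilon>}) / real (hr \<theta> r) powr 1) \<longlonglongrightarrow> 0"
      proof (rule tendsto_sandwich[OF _ _ tendsto_const inv0])
        show "\<forall>\<^sub>F r in sequentially. 0 \<le> real (card {k \<in> Ir \<theta> r. fdist (fdelta m X k) (crisp 0) \<ge> \<epsilon>}) / real (hr \<theta> r) powr 1"
          by simp
        show "\<forall>\<^sub>F r in sequentially. real (card {k \<in> Ir \<theta> r. fdist (fdelta m X k) (crisp 0) \<ge> \<epsilon>}) / real (hr \<theta> r) powr 1 \<le> inverse (real (hr \<theta> r))"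
        proof (rule always_eventually, rule allI)
          fix r
          have "{k \<in> Ir \<theta> r. fdist (fdelta m X k) (crisp 0) \<ge> \<epsilon>} \<subseteq> {\<theta> r}"
          proof
            fix k assume k: "k \<in> {k \<in> Ir \<theta> r. fdist (fdelta m X k) (crisp 0) \<ge> \<epsilon>}"
            then have "a k \<noteq> 0" using e by (auto simp: dX fdist_crisp)
            then obtain j where "k = \<theta> j" by (auto simp: a_def split: if_splits)
            moreover then have "j = r" using Ir_range[OF assms(4)] k by blast
            ultimately show "k \<in> {\<theta> r}" by simp
          qed
          then have "card {k \<in> Ir \<theta> r. fdist (fdelta m X k) (crisp 0) \<ge> \<epsilon>} \<le> card {\<theta> r}"
            by (intro card_mono) simp_all
          then have c1: "real (card {k \<in> Ir \<theta> r. fdist (fdelta m X k) (crisp 0) \<ge> \<epsilon>}) \<le> 1" by simp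
          have "real (card {k \<in> Ir \<theta> r. fdist (fdelta m X k) (crisp 0) \<ge> \<epsilon>}) / real (hr \<theta> r) \<le> 1 / real (hr \<theta> r)"
            by (rule divide_right_mono[OF c1]) simp
          then show "real (card {k \<in> Ir \<theta> r. fdist (fdelta m X k) (crisp 0) \<ge> \<epsilon>}) / real (hr \<theta> r) powr 1 \<le> inverse (real (hr \<theta> r))"
            by (simp add: divide_inverse)
        qed
      qed
    qed
    then show ?thesis using fsX crisp_fuzzy unfolding S_theta_def by blast
  qed
  have XN: "X \<notin> N_theta 1 p \<theta> m"
  proof
    assume "X \<in> N_theta 1 p \<theta> m"
    then obtain X0 where X0: "fuzzy_number X0" and sc: "strong_conv 1 p \<theta> m X X0"
      unfolding N_theta_def by blast
    define c0 where "c0 = lower X0 1"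
    define Q where "Q r = (\<Sum>k\<in>Ir \<theta> r. fdist (fdelta m X k) X0 powr p) / real (hr \<theta> r) powr 1" for r
    have Q0: "Q \<longlonglongrightarrow> 0" using sc unfolding strong_conv_def Q_def .
    have ev1: "\<forall>\<^sub>F r in sequentially. Q r < 1" using order_tendstoD(2)[OF Q0] by simp
    have ev2: "\<forall>\<^sub>F r in sequentially. real (hr \<theta> r) \<ge> max 1 (\<bar>c0\<bar> powr p)"
      using hinf unfolding filterlim_at_top by blast
    have ev3: "\<forall>\<^sub>F r in sequentially. r \<ge> 1" by (rule eventually_ge_at_top)
    have "\<forall>\<^sub>F r in sequentially. Q r < 1 \<and> real (hr \<theta> r) \<ge> max 1 (\<bar>c0\<bar> powr p) \<and> r \<ge> 1"
      by (intro eventually_conj ev1 ev2 ev3)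
    then obtain N where N: "\<And>r. r \<ge> N \<Longrightarrow> Q r < 1 \<and> real (hr \<theta> r) \<ge> max 1 (\<bar>c0\<bar> powr p) \<and> r \<ge> 1"
      unfolding eventually_sequentially by blast
    obtain r where r1: "Q r < 1" and r2: "real (hr \<theta> r) \<ge> max 1 (\<bar>c0\<bar> powr p)" and r3: "r \<ge> 1"
      using N[of N] by blast
    define y where "y = real (\<theta> r + 1) powr (1 / p)"
    have ypos: "y > 0" by (simp add: y_def)
    have hle: "real (hr \<theta> r) \<le> real (\<theta> r + 1)" by (simp add: hr_def)
    have yp: "y powr p = real (\<theta> r + 1)" using assms(5) by (simp add: y_def powr_powr)
    have "\<bar>c0\<bar> = (\<bar>c0\<bar> powr p) powr (1/p)" using assms(5) by (simp add: powr_powr)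
    also have "\<dots> \<le> y" unfolding y_def
      by (rule powr_mono2) (use assms(5) r2 hle in auto)
    finally have cy: "\<bar>c0\<bar> \<le> y" .
    have ain: "\<theta> r \<in> Ir \<theta> r" using sm r3 by (auto simp: Ir_def strict_mono_less)
    have "a (\<theta> r) = 2 * y" by (simp add: a_def y_def)
    then have "y \<le> \<bar>a (\<theta> r) - c0\<bar>" using cy ypos by auto
    also have "\<dots> \<le> fdist (fdelta m X (\<theta> r)) X0" unfolding dX c0_def by (rule fdist_crisp_ge[OF X0])
    finally have "y powr p \<le> fdist (fdelta m X (\<theta> r)) X0 powr p"
      using ypos assms(5) by (intro powr_mono2) auto
    also have "\<dots> \<le> (\<Sum>k\<in>Ir \<theta> r. fdist (fdelta m X k) X0 powr p)"
      by (rule member_le_sum[OF ain]) (auto simp: Ir_def)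
    finally have sge: "real (hr \<theta> r) \<le> (\<Sum>k\<in>Ir \<theta> r. fdist (fdelta m X k) X0 powr p)"
      using yp hle by linarith
    have hpos: "real (hr \<theta> r) > 0" using r2 by linarith
    have "1 \<le> Q r" unfolding Q_def using sge hpos by (simp add: field_simps)
    then show False using r1 by simp
  qed
  have "N_theta 1 p \<theta> m \<subset> S_theta 1 \<theta> m" using incl[of 1 1] XS XN by auto
  then have "\<exists>\<beta>' \<gamma>'. 0 < \<beta>' \<and> \<beta>' \<le> \<gamma>' \<and> \<gamma>' \<le> 1 \<and> N_theta \<beta>' p \<theta> m \<subset> S_theta \<gamma>' \<theta> m"
    by (intro exI[of _ 1]) simp
  moreover have "\<forall>X X0. fuzzy_seq X \<longrightarrow> fuzzy_number X0 \<longrightarrow> strong_conv \<beta> p \<theta> m X X0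
          \<longrightarrow> stat_conv \<gamma> \<theta> m X X0"
    using strong_imp_stat[OF assms(1,2,5)] by blast
  ultimately show ?thesis using incl[OF assms(1,2)] by blast
qed

end
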